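(* Let $M\colon[0,\infty)\times[0,\infty)\to[0,\infty)$ be symmetric and moderately increasing, suppose $\rho_M(x,y)=\dfrac{|x-y|}{M(|x|,|y|)}$ is a metric on $\mathbb{R}^n$, and suppose that for each $x$ the function $M(x,\cdot)$ is of class $C^2$ on $(0,\infty)$. Then $\rho_M$ is locally convex.
   Context: Convention $0/0=0$. A function $f\colon[0,\infty)\to[0,\infty)$ is moderately increasing if it is increasing and $f(t)/t$ is decreasing; $M$ is moderately increasing if $M(x,\cdot)$ and $M(\cdot,x)$ are moderately increasing for each fixed $x$. A metric $d$ is locally convex if for every $x$ there is $r_0>0$ such that the ball $\{y: d(x,y)<r\}$ is (Euclidean) convex for every $0<r<r_0$. *)

theory Defs
  imports "HOL-Analysis.Analysis"
begin

definition moderately_increasing :: "(real \<Rightarrow> real) \<Rightarrow> bool" where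
  "moderately_increasing f \<longleftrightarrow>
     (\<forall>s t. 0 \<le> s \<and> s \<le> t \<longrightarrow> f s \<le> f t) \<and>
     (\<forall>s t. 0 < s \<and> s \<le> t \<longrightarrow> f t / t \<le> f s / s)"

definition moderately_increasing2 :: "(real \<Rightarrow> real \<Rightarrow> real) \<Rightarrow> bool" where
  "moderately_increasing2 M \<longleftrightarrow>
     (\<forall>x\<ge>0. moderately_increasing (\<lambda>t. M x t) \<and> moderately_increasing (\<lambda>t. M t x))"

definition rhoM :: "(real \<Rightarrow> real \<Rightarrow> real) \<Rightarrow> 'a::euclidean_space \<Rightarrow> 'a \<Rightarrow> real" where
  "rhoM M x y = norm (x - y) / M (norm x) (norm y)"

definition is_metric :: "('a \<Rightarrow> 'a \<Rightarrow> real) \<Rightarrow> bool" where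
  "is_metric d \<longleftrightarrow>
     (\<forall>x y. 0 \<le> d x y) \<and> (\<forall>x y. d x y = 0 \<longleftrightarrow> x = y) \<and>
     (\<forall>x y. d x y = d y x) \<and> (\<forall>x y z. d x z \<le> d x y + d y z)"

definition C2_on :: "real set \<Rightarrow> (real \<Rightarrow> real) \<Rightarrow> bool" where
  "C2_on S f \<longleftrightarrow> (\<exists>f' f''. (\<forall>t\<in>S. (f has_real_derivative f' t) (at t) \<and>
                                   (f' has_real_derivative f'' t) (at t)) \<and>
                     continuous_on S f'')"

definition locally_convex_metric :: "('a::real_vector \<Rightarrow> 'a \<Rightarrow> real) \<Rightarrow> bool" where
  "locally_convex_metric d \<longleftrightarrow>
     (\<forall>x. \<exists>r0>0. \<forall>r. 0 < r \<and> r < r0 \<longrightarrow> convex {y. d x y < r})"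

end

theory Submission
  imports Defs
begin


lemma quad_convex:
  fixes x y1 y2 :: "'a::euclidean_space"
  assumes "c \<le> 1" "0 \<le> u" "0 \<le> v" "u + v = 1"
  shows "norm (x - (u *\<^sub>R y1 + v *\<^sub>R y2))^2 - c * norm (u *\<^sub>R y1 + v *\<^sub>R y2)^2
     \<le> u * (norm (x - y1)^2 - c * norm y1^2) + v * (norm (x - y2)^2 - c * norm y2^2)"
proof -
  have v: "v = 1 - u" using assms by simp
  have eq: "u * (norm (x - y1)^2 - c * norm y1^2) + v * (norm (x - y2)^2 - c * norm y2^2)
     - (norm (x - (u *\<^sub>R y1 + v *\<^sub>R y2))^2 - c * norm (u *\<^sub>R y1 + v *\<^sub>R y2)^2)
     = u * v * (1 - c) * norm (y1 - y2)^2"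
    unfolding v power2_norm_eq_inner
    by (simp add: inner_diff_left inner_diff_right inner_add_left inner_add_right
        inner_commute algebra_simps power2_eq_square)
  have "0 \<le> u * v * (1 - c) * norm (y1 - y2)^2" using assms by simp
  then show ?thesis using eq by linarith
qed

lemma zero_case:
  fixes M :: "real \<Rightarrow> real \<Rightarrow> real"
  assumes nonneg: "\<And>s t. 0 \<le> s \<Longrightarrow> 0 \<le> t \<Longrightarrow> 0 \<le> M s t"
    and modinc: "moderately_increasing2 M"
    and metric: "is_metric (rhoM M :: 'a::euclidean_space \<Rightarrow> 'a \<Rightarrow> real)"
  shows "convex {y::'a. rhoM M 0 y < r}"
proof -
  have rho0: "rhoM M 0 y = norm y / M 0 (norm y)" for y :: 'a
    by (simp add: rhoM_def)
  have pos: "M 0 (norm y) > 0" if "y \<noteq> 0" for y :: 'a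
  proof -
    have "rhoM M 0 y \<noteq> 0" using metric that unfolding is_metric_def by metis
    then have "M 0 (norm y) \<noteq> 0" by (simp add: rho0)
    with nonneg[of 0 "norm y"] show ?thesis by simp
  qed
  have mi: "moderately_increasing (\<lambda>t. M 0 t)" using modinc unfolding moderately_increasing2_def by simp
  have mono: "rhoM M 0 z \<le> rhoM M 0 y" if "norm z \<le> norm y" for y z :: 'a
  proof (cases "z = 0")
    case True
    then show ?thesis using nonneg[of 0 "norm y"] unfolding rho0 by simp
  next
    case False
    then have y: "y \<noteq> 0" using that by auto
    have pz: "M 0 (norm z) > 0" using pos False by blast
    have py: "M 0 (norm y) > 0" using pos y by blast
    have nz: "norm z > 0" using False by simp
    have "M 0 (norm y) / norm y \<le> M 0 (norm z) / norm z"
      using mi nz that unfolding moderately_increasing_def by blast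
    then have "M 0 (norm y) * norm z \<le> M 0 (norm z) * norm y"
      using nz y by (simp add: field_simps)
    then show ?thesis unfolding rho0 using pz py by (simp add: field_simps)
  qed
  show ?thesis
  proof (rule convexI)
    fix y1 y2 :: 'a and u v :: real
    assume y1: "y1 \<in> {y. rhoM M 0 y < r}" and y2: "y2 \<in> {y. rhoM M 0 y < r}"
      and uv: "0 \<le> u" "0 \<le> v" "u + v = 1"
    have "norm (u *\<^sub>R y1 + v *\<^sub>R y2) \<le> u * norm y1 + v * norm y2"
      using uv norm_triangle_ineq[of "u *\<^sub>R y1" "v *\<^sub>R y2"] by simp
    also have "\<dots> \<le> max (norm y1) (norm y2)"
    proof -
      have "u * norm y1 + v * norm y2 \<le> u * max (norm y1) (norm y2) + v * max (norm y1) (norm y2)"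
        using uv by (intro add_mono mult_left_mono) auto
      also have "\<dots> = max (norm y1) (norm y2)" using uv by (simp add: distrib_right[symmetric])
      finally show ?thesis .
    qed
    finally have "norm (u *\<^sub>R y1 + v *\<^sub>R y2) \<le> max (norm y1) (norm y2)" .
    then show "u *\<^sub>R y1 + v *\<^sub>R y2 \<in> {y. rhoM M 0 y < r}"
    proof (cases "norm y1 \<le> norm y2")
      case True
      then have "rhoM M 0 (u *\<^sub>R y1 + v *\<^sub>R y2) \<le> rhoM M 0 y2"
        using mono \<open>norm (u *\<^sub>R y1 + v *\<^sub>R y2) \<le> max (norm y1) (norm y2)\<close> by (simp add: max_def)
      then show ?thesis using y2 by simp
    next
      case False
      then have "rhoM M 0 (u *\<^sub>R y1 + v *\<^sub>R y2) \<le> rhoM M 0 y1"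
        using mono \<open>norm (u *\<^sub>R y1 + v *\<^sub>R y2) \<le> max (norm y1) (norm y2)\<close> by (simp add: max_def)
      then show ?thesis using y1 by simp
    qed
  qed
qed


lemma nonzero_case:
  fixes M :: "real \<Rightarrow> real \<Rightarrow> real" and x :: "'a::euclidean_space"
  assumes nonneg: "\<And>s t. 0 \<le> s \<Longrightarrow> 0 \<le> t \<Longrightarrow> 0 \<le> M s t"
    and modinc: "moderately_increasing2 M"
    and metric: "is_metric (rhoM M :: 'a \<Rightarrow> 'a \<Rightarrow> real)"
    and C2: "\<And>x. 0 \<le> x \<Longrightarrow> C2_on {0<..} (\<lambda>t. M x t)"
    and x0: "x \<noteq> 0"
  shows "\<exists>r0>0. \<forall>r. 0 < r \<and> r < r0 \<longrightarrow> convex {y. rhoM M x y < r}"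
proof -
  define s where "s = norm x"
  have s: "s > 0" using x0 by (simp add: s_def)
  define f where "f = (\<lambda>t. M s t)"
  have rho: "rhoM M x y = norm (x - y) / f (norm y)" for y
    by (simp add: rhoM_def f_def s_def)
  have mi: "moderately_increasing f"
    using modinc s unfolding moderately_increasing2_def f_def by simp
  have fmono: "\<And>t1 t2. 0 \<le> t1 \<Longrightarrow> t1 \<le> t2 \<Longrightarrow> f t1 \<le> f t2"
    using mi unfolding moderately_increasing_def by blast
  have fdec: "\<And>t1 t2. 0 < t1 \<Longrightarrow> t1 \<le> t2 \<Longrightarrow> f t2 / t2 \<le> f t1 / t1"
    using mi unfolding moderately_increasing_def by blast
  have fnn: "\<And>t. 0 \<le> t \<Longrightarrow> 0 \<le> f t" using nonneg s by (simp add: f_def)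
  have fne: "f (norm y) > 0" if "y \<noteq> x" for y
  proof -
    have "rhoM M x y \<noteq> 0" using metric that unfolding is_metric_def by metis
    then have "f (norm y) \<noteq> 0" by (simp add: rho)
    with fnn[of "norm y"] show ?thesis by simp
  qed
  define A where "A = f s"
  have A: "A > 0"
  proof -
    have "-x \<noteq> x" using x0 by (metis add.inverse_neutral add.inverse_unique
          add_cancel_right_left eq_neg_iff_add_eq_0 neg_equal_zero scaleR_2 scaleR_eq_0_iff zero_neq_numeral)
    from fne[OF this] show ?thesis by (simp add: A_def s_def)
  qed
  have fpos: "f t > 0" if "s/2 \<le> t" for t
  proof (cases "s \<le> t")
    case True
    then show ?thesis using fmono[of s t] s A by (simp add: A_def)
  next
    case False
    have t: "t > 0" using that s by simp
    have "f s / s \<le> f t / t" using fdec[of t s] t False by simp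
    moreover have "f s / s > 0" using A s by (simp add: A_def)
    ultimately have "f t / t > 0" by linarith
    then show ?thesis using t by (simp add: zero_less_divide_iff)
  qed
  have fbound: "f t \<le> A * (1 + t/s)" if "0 \<le> t" for t
  proof (cases "t \<le> s")
    case True
    have "f t \<le> A" using fmono[of t s] that True by (simp add: A_def)
    also have "A \<le> A * (1 + t/s)" using A s that by simp
    finally show ?thesis .
  next
    case False
    have "f t / t \<le> A / s" using fdec[of s t] s False by (simp add: A_def)
    then have "f t \<le> A * t / s" using False s by (simp add: field_simps)
    also have "\<dots> \<le> A * (1 + t/s)" using A s by (simp add: field_simps)
    finally show ?thesis .
  qed
  obtain f' f'' where d1: "\<And>t. t > 0 \<Longrightarrow> (f has_real_derivative f' t) (at t)"
    and d2: "\<And>t. t > 0 \<Longrightarrow> (f' has_real_derivative f'' t) (at t)"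
    and cf'': "continuous_on {0<..} f''"
    using C2[of s] s unfolding C2_on_def f_def by auto
  define a where "a = s/2"
  define b where "b = 3 * s / 2"
  have a: "a > 0" using s by (simp add: a_def)
  have ab: "{a..b} \<subseteq> {0<..}" using a by auto
  define g' where "g' t = 2 * f t * f' t" for t
  define g'' where "g'' t = 2 * (f' t * f' t + f t * f'' t)" for t
  have dg: "((\<lambda>t. f t * f t) has_real_derivative g' t) (at t)" if "t \<in> {a..b}" for t
  proof -
    have t: "t > 0" using that a by simp
    show ?thesis using DERIV_mult[OF d1[OF t] d1[OF t]] by (simp add: g'_def algebra_simps)
  qed
  have dg': "(g' has_real_derivative g'' t) (at t)" if "t \<in> {a..b}" for t
  proof -
    have t: "t > 0" using that a by simp
    have "((\<lambda>t. 2 * f t * f' t) has_real_derivative 2 * (f' t * f' t + f t * f'' t)) (at t)"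
      using DERIV_mult[OF DERIV_cmult[OF d1[OF t], of 2] d2[OF t]] by (simp add: algebra_simps)
    then show ?thesis by (simp add: g'_def[abs_def] g''_def)
  qed
  have cf: "continuous_on {a..b} f"
  proof (intro continuous_at_imp_continuous_on ballI)
    fix t assume "t \<in> {a..b}" then have "t > 0" using a by auto
    then show "isCont f t" using DERIV_isCont[OF d1] by blast
  qed
  have cf': "continuous_on {a..b} f'"
  proof (intro continuous_at_imp_continuous_on ballI)
    fix t assume "t \<in> {a..b}" then have "t > 0" using a by auto
    then show "isCont f' t" using DERIV_isCont[OF d2] by blast
  qed
  have cf2: "continuous_on {a..b} f''" using continuous_on_subset[OF cf'' ab] .
  have cg': "continuous_on {a..b} g'" unfolding g'_def
    by (intro continuous_intros cf cf')
  have cg'': "continuous_on {a..b} g''" unfolding g''_def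
    by (intro continuous_intros cf cf' cf2)
  obtain B1 where B1: "\<And>t. t \<in> {a..b} \<Longrightarrow> norm (g' t) \<le> B1"
    using compact_imp_bounded[OF compact_continuous_image[OF cg' compact_Icc]]
    unfolding bounded_iff by (meson image_eqI)
  obtain B2 where B2: "\<And>t. t \<in> {a..b} \<Longrightarrow> norm (g'' t) \<le> B2"
    using compact_imp_bounded[OF compact_continuous_image[OF cg'' compact_Icc]]
    unfolding bounded_iff by (meson image_eqI)
  define B where "B = max 0 (max B1 B2)"
  have B0: "B \<ge> 0" by (simp add: B_def)
  have Bg': "g' t \<le> B" if "t \<in> {a..b}" for t using B1[OF that] by (simp add: B_def)
  have Bg'': "g'' t \<le> B" if "t \<in> {a..b}" for t using B2[OF that] by (simp add: B_def)
  define K where "K = B / a + B"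
  have K0: "K \<ge> 0" using B0 a by (simp add: K_def)
  define p where "p t = K * t^2 - f t * f t" for t
  have dp: "(p has_real_derivative (2*K*t - g' t)) (at t)" if "t \<in> {a..b}" for t
  proof -
    have k: "((\<lambda>t. K * t^2) has_real_derivative (K * (2 * t))) (at t)"
      by (auto intro!: derivative_eq_intros)
    have "((\<lambda>t. K * t^2 - f t * f t) has_real_derivative (K * (2 * t) - g' t)) (at t)"
      using DERIV_diff[OF k dg[OF that]] by simp
    then show ?thesis by (simp add: p_def[abs_def] algebra_simps)
  qed
  have dp': "((\<lambda>t. 2*K*t - g' t) has_real_derivative (2*K - g'' t)) (at t)" if "t \<in> {a..b}" for t
    using DERIV_diff[OF DERIV_cmult[OF DERIV_ident, of "2*K" t] dg'[OF that]] by simp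
  have pconv: "convex_on {a..b} p"
  proof (rule f''_ge0_imp_convex[where f' = "\<lambda>t. 2*K*t - g' t" and f'' = "\<lambda>t. 2*K - g'' t"])
    show "convex {a..b}" by simp
    show "\<And>t. t \<in> {a..b} \<Longrightarrow> (p has_real_derivative (2*K*t - g' t)) (at t)" using dp by blast
    show "\<And>t. t \<in> {a..b} \<Longrightarrow> ((\<lambda>t. 2*K*t - g' t) has_real_derivative (2*K - g'' t)) (at t)"
      using dp' by blast
    fix t assume t: "t \<in> {a..b}"
    have "K \<ge> B" using B0 a by (simp add: K_def)
    then show "0 \<le> 2*K - g'' t" using Bg''[OF t] B0 by simp
  qed
  have pmono: "p t1 \<le> p t2" if "t1 \<in> {a..b}" "t2 \<in> {a..b}" "t1 \<le> t2" for t1 t2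
  proof -
    have D: "(p has_real_derivative (2*K*t - g' t)) (at t)" if "t \<in> {t1..t2}" for t
      using dp that \<open>t1 \<in> {a..b}\<close> \<open>t2 \<in> {a..b}\<close> by auto
    have N: "0 \<le> 2*K*t - g' t" if t: "t \<in> {t1..t2}" for t
    proof -
      have ta: "t \<in> {a..b}" using t \<open>t1 \<in> {a..b}\<close> \<open>t2 \<in> {a..b}\<close> by auto
      have "B = (B / a) * a" using a by simp
      also have "\<dots> \<le> K * t" using ta a B0 by (intro mult_mono) (auto simp: K_def)
      finally have "B \<le> K * t" .
      then show "0 \<le> 2*K*t - g' t" using Bg'[OF ta] B0 by simp
    qed
    show ?thesis using deriv_nonneg_imp_mono[of t1 t2 p "\<lambda>t. 2*K*t - g' t", OF D N that(3)] by simp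
  qed
  define r0 where "r0 = min (s / (8*A)) (1 / (K+1))"
  have r0: "r0 > 0" using s A K0 by (simp add: r0_def)
  show ?thesis
  proof (intro exI[of _ r0] conjI allI impI r0)
    fix r assume "0 < r \<and> r < r0"
    then have r: "0 < r" "r < r0" by auto
    have rA: "r * A < s / 8"
    proof -
      have "r < s / (8*A)" using r by (simp add: r0_def)
      then show ?thesis using A by (simp add: field_simps)
    qed
    have rK: "r * (K + 1) < 1"
    proof -
      have "r < 1 / (K+1)" using r by (simp add: r0_def)
      then show ?thesis using K0 by (simp add: field_simps)
    qed
    define c where "c = r^2 * K"
    have c1: "c \<le> 1"
    proof -
      have "K * r \<ge> 0" using K0 r by simp
      then have "r * K < 1" "r < 1" using rK r(1) by (auto simp: algebra_simps)
      then have "r * (r * K) \<le> r * K" using r K0 by (intro mult_left_le_one_le) auto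
      then show ?thesis using \<open>r * K < 1\<close> by (simp add: c_def power2_eq_square algebra_simps)
    qed
    have conf: "norm (x - y) < s/2" if "rhoM M x y < r" for y
    proof (cases "y = x")
      case True then show ?thesis using s by simp
    next
      case False
      define d where "d = norm (x - y)"
      have fy: "f (norm y) > 0" using fne[OF False] .
      have "d < r * f (norm y)" using that fy by (simp add: rho d_def pos_divide_less_eq)
      have ny: "norm y \<le> s + d"
        using norm_triangle_ineq4[of x "x - y"] by (simp add: s_def d_def)
      have "f (norm y) \<le> A * (1 + norm y / s)" using fbound by simp
      also have "\<dots> \<le> A * (2 + d / s)"
      proof -
        have "norm y / s \<le> (s + d) / s" using ny s by (simp add: divide_right_mono)
        also have "\<dots> = 1 + d / s" using s by (simp add: field_simps)
        finally show ?thesis using A by simp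
      qed
      finally have "d < r * (A * (2 + d / s))"
        using \<open>d < r * f (norm y)\<close> r by (meson less_le_trans mult_left_mono less_imp_le)
      also have "\<dots> = (r * A) * (2 + d / s)" by simp
      also have "\<dots> \<le> (s / 8) * (2 + d / s)"
        using rA s by (intro mult_right_mono) (auto simp: d_def)
      also have "\<dots> = s / 4 + d / 8" using s by (simp add: field_simps)
      finally show ?thesis using s by (simp add: d_def)
    qed
    have normab: "norm y \<in> {a..b}" if "norm (x - y) < s/2" for y
    proof -
      have "norm x - norm y \<le> norm (x - y)" "norm y - norm x \<le> norm (x - y)"
        using norm_triangle_ineq2[of x y] norm_triangle_ineq3[of x y] by (auto simp: norm_minus_commute)
      then show ?thesis using that by (auto simp: a_def b_def s_def)
    qed
    define h where "h y = norm (x - y)^2 - r^2 * (f (norm y))^2" for y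
    have hneg: "h y < 0" if "rhoM M x y < r" for y
    proof -
      have ab': "norm y \<in> {a..b}" using normab[OF conf[OF that]] .
      have fy: "f (norm y) > 0" using fpos ab' by (simp add: a_def)
      have "norm (x - y) < r * f (norm y)" using that fy by (simp add: rho pos_divide_less_eq)
      then have "norm (x - y)^2 < (r * f (norm y))^2"
        by (intro power_strict_mono) auto
      then show ?thesis by (simp add: h_def power_mult_distrib)
    qed
    have hpos: "rhoM M x z < r" if "norm (x - z) < s/2" "h z < 0" for z
    proof -
      have ab': "norm z \<in> {a..b}" using normab[OF that(1)] .
      have fz: "f (norm z) > 0" using fpos ab' by (simp add: a_def)
      have "norm (x - z)^2 < (r * f (norm z))^2" using that(2) by (simp add: h_def power_mult_distrib)
      then have "norm (x - z) < r * f (norm z)"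
        by (rule power2_less_imp_less) (use r fz in simp)
      then show ?thesis using fz by (simp add: rho pos_divide_less_eq)
    qed
    have hsplit: "h y = (norm (x - y)^2 - c * norm y^2) + r^2 * p (norm y)" for y
      by (simp add: h_def c_def p_def power2_eq_square algebra_simps)
    show "convex {y. rhoM M x y < r}"
    proof (rule convexI)
      fix y1 y2 :: 'a and u v :: real
      assume y1: "y1 \<in> {y. rhoM M x y < r}" and y2: "y2 \<in> {y. rhoM M x y < r}"
        and uv: "0 \<le> u" "0 \<le> v" "u + v = 1"
      define z where "z = u *\<^sub>R y1 + v *\<^sub>R y2"
      have c1': "norm (x - y1) < s/2" "norm (x - y2) < s/2" using conf y1 y2 by auto
      have "x - z = u *\<^sub>R (x - y1) + v *\<^sub>R (x - y2)"
        using uv by (simp add: z_def algebra_simps scaleR_add_left[symmetric])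
      then have "norm (x - z) \<le> u * norm (x - y1) + v * norm (x - y2)"
        using uv norm_triangle_ineq[of "u *\<^sub>R (x - y1)" "v *\<^sub>R (x - y2)"] by simp
      also have "\<dots> \<le> u * max (norm (x - y1)) (norm (x - y2)) + v * max (norm (x - y1)) (norm (x - y2))"
        using uv by (intro add_mono mult_left_mono) auto
      also have "\<dots> = max (norm (x - y1)) (norm (x - y2))" using uv by (simp add: distrib_right[symmetric])
      also have "\<dots> < s/2" using c1' by simp
      finally have zc: "norm (x - z) < s/2" .
      have n1: "norm y1 \<in> {a..b}" and n2: "norm y2 \<in> {a..b}" using normab c1' by auto
      have nz: "norm z \<in> {a..b}" using normab zc by auto
      define w where "w = u * norm y1 + v * norm y2"
      have zw: "norm z \<le> w"
        using uv norm_triangle_ineq[of "u *\<^sub>R y1" "v *\<^sub>R y2"] by (simp add: z_def w_def)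
      have wab: "w \<in> {a..b}"
      proof -
        have "u * a + v * a \<le> w" "w \<le> u * b + v * b"
          using n1 n2 uv unfolding w_def by (auto intro!: add_mono mult_left_mono)
        moreover have "u * a + v * a = a" "u * b + v * b = b" using uv by (simp_all add: distrib_right[symmetric])
        ultimately show ?thesis by simp
      qed
      have "p (norm z) \<le> p w" using pmono nz wab zw by blast
      also have "p w \<le> u * p (norm y1) + v * p (norm y2)"
      proof -
        have "p ((1 - v) *\<^sub>R norm y1 + v *\<^sub>R norm y2) \<le> (1 - v) * p (norm y1) + v * p (norm y2)"
          using convex_onD[OF pconv, of v "norm y1" "norm y2"] uv n1 n2 by simp
        moreover have "1 - v = u" using uv by simp
        ultimately show ?thesis by (simp add: w_def)
      qed
      finally have pz: "p (norm z) \<le> u * p (norm y1) + v * p (norm y2)" .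
      have qz: "norm (x - z)^2 - c * norm z^2
          \<le> u * (norm (x - y1)^2 - c * norm y1^2) + v * (norm (x - y2)^2 - c * norm y2^2)"
        unfolding z_def by (rule quad_convex[OF c1 uv])
      have "h z \<le> u * h y1 + v * h y2"
      proof -
        have "r^2 * p (norm z) \<le> r^2 * (u * p (norm y1) + v * p (norm y2))"
          using pz by (intro mult_left_mono) auto
        then show ?thesis using qz unfolding hsplit by (simp add: algebra_simps)
      qed
      moreover have "u * h y1 + v * h y2 < 0"
      proof -
        have h1: "h y1 < 0" and h2: "h y2 < 0" using hneg y1 y2 by auto
        show ?thesis
        proof (cases "u = 0")
          case True then show ?thesis using uv h2 by simp
        next
          case False
          then have "u * h y1 < 0" using uv h1 by (simp add: mult_pos_neg)
          moreover have "v * h y2 \<le> 0" using uv h2 by (simp add: mult_nonneg_nonpos)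
          ultimately show ?thesis by simp
        qed
      qed
      ultimately have "h z < 0" by simp
      then show "u *\<^sub>R y1 + v *\<^sub>R y2 \<in> {y. rhoM M x y < r}"
        using hpos zc by (simp add: z_def)
    qed
  qed
qed


theorem lemma5p5:
  fixes M :: "real \<Rightarrow> real \<Rightarrow> real"
  assumes nonneg: "\<And>s t. 0 \<le> s \<Longrightarrow> 0 \<le> t \<Longrightarrow> 0 \<le> M s t"
    and symm: "\<And>s t. 0 \<le> s \<Longrightarrow> 0 \<le> t \<Longrightarrow> M s t = M t s"
    and modinc: "moderately_increasing2 M"
    and metric: "is_metric (rhoM M :: 'a::euclidean_space \<Rightarrow> 'a \<Rightarrow> real)"
    and C2: "\<And>x. 0 \<le> x \<Longrightarrow> C2_on {0<..} (\<lambda>t. M x t)"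
  shows "locally_convex_metric (rhoM M :: 'a \<Rightarrow> 'a \<Rightarrow> real)"
  unfolding locally_convex_metric_def
proof
  fix x :: 'a
  show "\<exists>r0>0. \<forall>r. 0 < r \<and> r < r0 \<longrightarrow> convex {y. rhoM M x y < r}"
  proof (cases "x = 0")
    case True
    then show ?thesis using zero_case[OF nonneg modinc metric] by (intro exI[of _ 1]) auto
  next
    case False
    then show ?thesis using nonzero_case[OF nonneg modinc metric C2] by blast
  qed
qed

end
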